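(* Let $X$ be a real linear space, $T$ an infinite index set, and $f, f_t : X \to \overline{\mathbb{R}} := \mathbb{R}\cup\{\pm\infty\}$ ($t \in T$) convex proper functions. Let $M := \bigcap_{t\in T} \operatorname{dom} f_t$. Let $v:\mathbb{R}^T\to\overline{\mathbb{R}}$ be $v(y) := \inf\{f(x) : f_t(x)\le y_t \text{ for all } t\in T\}$, where $\mathbb{R}^T$ carries the product topology, and let $\overline{v}$ be the lower semicontinuous hull of $v$, so that $\overline{v}(0_Y) = \sup_{V} \inf_{y\in V} v(y)$, the supremum being over all neighborhoods $V$ of the origin $0_Y$ of $\mathbb{R}^T$. Then $$\overline{v}(0_Y)=\sup_{\varepsilon>0,\ H\in\mathcal{F}(T)}\ \inf_{x\in M}\{f(x): f_t(x)\le\varepsilon \text{ for all } t\in H\}.$$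
   Context: $\operatorname{dom} g := \{x : g(x)<+\infty\}$; a proper function never takes the value $-\infty$ and has nonempty domain. $\mathcal{F}(T)$ is the family of nonempty finite subsets of $T$. Convention: $\inf\emptyset=+\infty$. *)

theory Defs
  imports "HOL-Analysis.Analysis" "HOL-Library.Extended_Real"
begin

definition edom :: "('a \<Rightarrow> ereal) \<Rightarrow> 'a set" where
  "edom g = {x. g x < \<infinity>}"

definition econvex :: "('a::real_vector \<Rightarrow> ereal) \<Rightarrow> bool" where
  "econvex g \<longleftrightarrow> convex {(x, r::real). g x \<le> ereal r}"

definition eproper :: "('a \<Rightarrow> ereal) \<Rightarrow> bool" where
  "eproper g \<longleftrightarrow> (\<forall>x. g x \<noteq> -\<infinity>) \<and> edom g \<noteq> {}"

definition valfun :: "('a \<Rightarrow> ereal) \<Rightarrow> ('b \<Rightarrow> 'a \<Rightarrow> ereal) \<Rightarrow> ('b \<Rightarrow> real) \<Rightarrow> ereal" where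
  "valfun f ft y = Inf {f x | x. \<forall>t. ft t x \<le> ereal (y t)}"

end

theory Submission
  imports Defs
begin

lemma nbhd_box:
  fixes U :: "('b \<Rightarrow> real) set"
  assumes "open U" "(\<lambda>t. 0) \<in> U"
  shows "\<exists>\<epsilon>>0. \<exists>H. finite H \<and> H \<noteq> {} \<and> (\<forall>y. (\<forall>t\<in>H. \<bar>y t\<bar> < \<epsilon>) \<longrightarrow> y \<in> U)"
proof -
  have "openin (product_topology (\<lambda>i. euclidean) UNIV) U"
    using assms(1) unfolding open_fun_def by auto
  from product_topology_open_contains_basis[OF this assms(2)]
  obtain X where H: "(\<lambda>t. 0::real) \<in> (\<Pi>\<^sub>E i\<in>UNIV. X i)" "\<And>i. open (X i)"
      "finite {i. X i \<noteq> UNIV}" "(\<Pi>\<^sub>E i\<in>UNIV. X i) \<subseteq> U"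
    by auto
  have "\<forall>i. \<exists>e>0. ball 0 e \<subseteq> X i"
    using H(1,2) by (meson PiE_E UNIV_I openE)
  then obtain e where e: "\<And>i. e i > 0" "\<And>i. ball 0 (e i) \<subseteq> X i" by metis
  define I where "I = {i. X i \<noteq> UNIV}"
  define H' where "H' = insert undefined I"
  define \<epsilon> where "\<epsilon> = Min (e ` H')"
  have fin: "finite H'" using H(3) unfolding H'_def I_def by auto
  have "\<epsilon> > 0" unfolding \<epsilon>_def using fin e(1) H'_def by auto
  moreover have "y \<in> U" if "\<forall>t\<in>H'. \<bar>y t\<bar> < \<epsilon>" for y
  proof -
    have "y \<in> (\<Pi>\<^sub>E i\<in>UNIV. X i)"
    proof (auto simp: PiE_iff)
      fix i
      show "y i \<in> X i"
      proof (cases "i \<in> I")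
        case True
        then have "\<epsilon> \<le> e i" unfolding \<epsilon>_def H'_def using fin H'_def by auto
        moreover have "\<bar>y i\<bar> < \<epsilon>" using that True H'_def by auto
        ultimately have "y i \<in> ball 0 (e i)" by (simp add: dist_real_def)
        then show ?thesis using e(2)[of i] by blast
      next
        case False then show ?thesis unfolding I_def by auto
      qed
    qed
    then show ?thesis using H(4) by auto
  qed
  ultimately show ?thesis using fin H'_def by blast
qed

theorem lemma2p1:
  fixes f :: "'a::real_vector \<Rightarrow> ereal"
    and ft :: "'b \<Rightarrow> 'a \<Rightarrow> ereal"
  assumes "infinite (UNIV :: 'b set)"
    and "econvex f" and "eproper f"
    and "\<And>t. econvex (ft t)" and "\<And>t. eproper (ft t)"
  shows "(SUP V \<in> {V :: ('b \<Rightarrow> real) set. \<exists>U. open U \<and> (\<lambda>t. 0) \<in> U \<and> U \<subseteq> V}.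
            INF y \<in> V. valfun f ft y)
       = (SUP p \<in> {(\<epsilon>::real, H :: 'b set). \<epsilon> > 0 \<and> finite H \<and> H \<noteq> {}}.
            Inf {f x | x. x \<in> (\<Inter>t. edom (ft t)) \<and> (\<forall>t \<in> snd p. ft t x \<le> ereal (fst p))})"
  (is "?L = ?R")
proof (rule antisym)
  let ?S = "\<lambda>p. Inf {f x | x. x \<in> (\<Inter>t. edom (ft t)) \<and> (\<forall>t \<in> snd p. ft t x \<le> ereal (fst p))}"
  let ?P = "{(\<epsilon>::real, H :: 'b set). \<epsilon> > 0 \<and> finite H \<and> H \<noteq> {}}"
  show "?L \<le> ?R"
  proof (rule SUP_least)
    fix V :: "('b \<Rightarrow> real) set"
    assume "V \<in> {V. \<exists>U. open U \<and> (\<lambda>t. 0) \<in> U \<and> U \<subseteq> V}"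
    then obtain U where U: "open U" "(\<lambda>t. 0) \<in> U" "U \<subseteq> V" by auto
    obtain \<epsilon> H where eH: "\<epsilon> > 0" "finite H" "H \<noteq> {}"
      "\<And>y. (\<forall>t\<in>H. \<bar>y t\<bar> < \<epsilon>) \<Longrightarrow> y \<in> U"
      using nbhd_box[OF U(1,2)] by blast
    have p: "(\<epsilon>/2, H) \<in> ?P" using eH by auto
    have "(INF y \<in> V. valfun f ft y) \<le> ?S (\<epsilon>/2, H)"
    proof (rule Inf_greatest, clarsimp)
      fix x assume x: "\<forall>t. x \<in> edom (ft t)" "\<forall>t\<in>H. ft t x \<le> ereal (\<epsilon> / 2)"
      have fin: "\<bar>ft t x\<bar> \<noteq> \<infinity>" for t
        using x(1) assms(5)[of t] unfolding edom_def eproper_def by auto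
      define y where "y = (\<lambda>t. if t \<in> H then max (real_of_ereal (ft t x)) 0
                               else real_of_ereal (ft t x))"
      have "y \<in> U"
      proof (rule eH(4), intro ballI)
        fix t assume "t \<in> H"
        then have "real_of_ereal (ft t x) \<le> \<epsilon>/2" using x(2) fin[of t]
          by (metis ereal_less_eq(3) ereal_real')
        then show "\<bar>y t\<bar> < \<epsilon>" using \<open>t \<in> H\<close> eH(1) unfolding y_def by auto
      qed
      then have yV: "y \<in> V" using U(3) by auto
      have "\<forall>t. ft t x \<le> ereal (y t)"
      proof
        fix t
        have "ft t x = ereal (real_of_ereal (ft t x))" using fin[of t] by (simp add: ereal_real')
        also have "\<dots> \<le> ereal (y t)" unfolding y_def by auto
        finally show "ft t x \<le> ereal (y t)" .
      qed
      then have "valfun f ft y \<le> f x" unfolding valfun_def by (auto intro: Inf_lower)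
      then show "(INF y \<in> V. valfun f ft y) \<le> f x"
        using yV by (meson INF_lower order_trans)
    qed
    also have "\<dots> \<le> ?R" using p by (rule SUP_upper)
    finally show "(INF y \<in> V. valfun f ft y) \<le> ?R" .
  qed
next
  let ?S = "\<lambda>p. Inf {f x | x. x \<in> (\<Inter>t. edom (ft t)) \<and> (\<forall>t \<in> snd p. ft t x \<le> ereal (fst p))}"
  show "?R \<le> ?L"
  proof (rule SUP_least)
    fix p assume "p \<in> {(\<epsilon>::real, H :: 'b set). \<epsilon> > 0 \<and> finite H \<and> H \<noteq> {}}"
    then obtain \<epsilon> H where p: "p = (\<epsilon>, H)" "\<epsilon> > 0" "finite H" by auto
    define V where "V = {y :: 'b \<Rightarrow> real. \<forall>t\<in>H. y (id t) \<in> {..<\<epsilon>}}"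
    have "open V" unfolding V_def by (rule product_topology_basis') (auto simp: p)
    moreover have "(\<lambda>t. 0) \<in> V" using p unfolding V_def by auto
    ultimately have Vin: "V \<in> {V :: ('b \<Rightarrow> real) set. \<exists>U. open U \<and> (\<lambda>t. 0) \<in> U \<and> U \<subseteq> V}"
      by auto
    have "?S p \<le> (INF y \<in> V. valfun f ft y)"
    proof (rule INF_greatest)
      fix y assume "y \<in> V"
      then have yl: "\<forall>t\<in>H. y t < \<epsilon>" unfolding V_def by auto
      show "?S p \<le> valfun f ft y" unfolding valfun_def
      proof (rule Inf_greatest)
        fix z assume "z \<in> {f x |x. \<forall>t. ft t x \<le> ereal (y t)}"
        then obtain x where zx: "z = f x" and x: "\<forall>t. ft t x \<le> ereal (y t)" by blast
        have "ft t x < \<infinity>" for t 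
        proof -
          have "ft t x \<le> ereal (y t)" using x by blast
          also have "\<dots> < \<infinity>" by simp
          finally show ?thesis .
        qed
        then have "x \<in> (\<Inter>t. edom (ft t))" unfolding edom_def by auto
        moreover have "\<forall>t\<in>H. ft t x \<le> ereal \<epsilon>" using x yl
          by (meson ereal_less_eq(3) less_imp_le order_trans)
        ultimately show "?S p \<le> z" unfolding p zx by (auto intro: Inf_lower)
      qed
    qed
    also have "\<dots> \<le> ?L" using Vin by (rule SUP_upper)
    finally show "?S p \<le> ?L" .
  qed
qed

end
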